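(* The function \[ F_0(k,a,b,c,d) = \frac{\Gamma(a+k)\Gamma(b+k)\Gamma(c+k)}{\Gamma(2d-a+k)\Gamma(2d-b+k)\Gamma(2d-c+k)}\cdot\frac{\Gamma(a+b+c-3d+\tfrac32)}{\Gamma(a+b-2d+1)\Gamma(a+c-2d+1)\Gamma(b+c-2d+1)} \] \[ \times\frac{(-1)^{a+b+c+d}}{\Gamma(a-d+\tfrac12)\Gamma(b-d+\tfrac12)\Gamma(c-d+\tfrac12)} \] is a WZ seed in the variables $a,b,c,d$.
   Context: A term $F(n_1,\dots,n_r)$ is hypergeometric in $n_1,\dots,n_r$ if each ratio $F(\dots,n_i+1,\dots)/F(\dots,n_i,\dots)$ is a rational function of $n_1,\dots,n_r$. Write $\Delta_n f(n)=f(n+1)-f(n)$. Two hypergeometric terms $F(n,k),G(n,k)$ form a WZ pair, and $G$ is called a WZ mate of $F$, if $\Delta_n F(n,k)=\Delta_k G(n,k)$. A hypergeometric term $F_0(k,a,b,\dots)$ (hypergeometric in $k,a,b,\dots$) is a WZ seed in the variables $a,b,\dots$ if for all integers $K,A,B,\dots$ and all complex $k_0$ and all values of the parameters $a,b,\dots$, the term $F(n,k)=F_0(Kn+k_0+k,\,An+a,\,Bn+b,\dots)$ has a WZ mate $G(n,k)$ (a hypergeometric term). Factors such as $(-1)^x$ or $z^x$ with non-integer exponent $x$ are understood as hypergeometric factors satisfying $(-1)^{x+1}=-(-1)^x$, $z^{x+1}=z\cdot z^x$ (e.g. defined via a fixed branch of the exponential). *)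

theory Defs
  imports "HOL-Analysis.Analysis" "HOL-Computational_Algebra.Polynomial"
begin

text \<open>Bivariate polynomials over the complex numbers, represented as polynomials in the
  first variable whose coefficients are polynomials in the second variable.\<close>
definition poly2 :: "complex poly poly \<Rightarrow> complex \<Rightarrow> complex \<Rightarrow> complex" where
  "poly2 P x y = poly (map_poly (\<lambda>q. poly q y) P) x"

text \<open>A term H(n,k) (n,k integers) is hypergeometric in n,k if both shift quotients
  H(n+1,k)/H(n,k) and H(n,k+1)/H(n,k) are rational functions p/q of n,k, stated in the
  usual denominator-free way: q(n,k) H(n+1,k) = p(n,k) H(n,k) with q a nonzero polynomial.\<close>
definition hypergeometric2 :: "(int \<Rightarrow> int \<Rightarrow> complex) \<Rightarrow> bool" where
  "hypergeometric2 H \<longleftrightarrow>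
     (\<exists>p q. q \<noteq> 0 \<and> (\<forall>n k. poly2 q (of_int n) (of_int k) * H (n + 1) k
                                  = poly2 p (of_int n) (of_int k) * H n k)) \<and>
     (\<exists>p q. q \<noteq> 0 \<and> (\<forall>n k. poly2 q (of_int n) (of_int k) * H n (k + 1)
                                  = poly2 p (of_int n) (of_int k) * H n k))"

text \<open>The factor (-1)^x for complex x, via the fixed branch exp(i pi x); it satisfies
  (-1)^(x+1) = -(-1)^x.\<close>
definition neg1pow :: "complex \<Rightarrow> complex" where
  "neg1pow x = exp (\<i> * of_real pi * x)"

text \<open>The seed F_0(k,a,b,c,d). Division by Gamma is the reciprocal Gamma function
  (in Isabelle, 1 / Gamma z = rGamma z for all z, an entire function).\<close>
definition F0 :: "complex \<Rightarrow> complex \<Rightarrow> complex \<Rightarrow> complex \<Rightarrow> complex \<Rightarrow> complex" where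
  "F0 k a b c d =
     Gamma (a + k) * Gamma (b + k) * Gamma (c + k)
       / (Gamma (2*d - a + k) * Gamma (2*d - b + k) * Gamma (2*d - c + k))
     * (Gamma (a + b + c - 3*d + 3/2)
       / (Gamma (a + b - 2*d + 1) * Gamma (a + c - 2*d + 1) * Gamma (b + c - 2*d + 1)))
     * (neg1pow (a + b + c + d)
       / (Gamma (a - d + 1/2) * Gamma (b - d + 1/2) * Gamma (c - d + 1/2)))"

definition F0_defined :: "complex \<Rightarrow> complex \<Rightarrow> complex \<Rightarrow> complex \<Rightarrow> complex \<Rightarrow> bool" where
  "F0_defined k a b c d \<longleftrightarrow>
     a + k \<notin> \<int>\<^sub>\<le>\<^sub>0 \<and> b + k \<notin> \<int>\<^sub>\<le>\<^sub>0 \<and> c + k \<notin> \<int>\<^sub>\<le>\<^sub>0 \<and>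
     a + b + c - 3*d + 3/2 \<notin> \<int>\<^sub>\<le>\<^sub>0"

end

theory Submission
  imports Defs
begin


lemma map_poly_eval_add:
  "map_poly (\<lambda>q. poly q y) (P + Q) = map_poly (\<lambda>q. poly q y) P + map_poly (\<lambda>q. poly q y) Q"
  by (intro poly_eqI) (simp add: coeff_map_poly)

lemma map_poly_eval_mult:
  "map_poly (\<lambda>q. poly q y) (P * Q) = map_poly (\<lambda>q. poly q y) P * map_poly (\<lambda>q. poly q y) Q"
  by (intro poly_eqI) (simp add: coeff_map_poly coeff_mult poly_sum)

lemma poly2_add: "poly2 (P + Q) x y = poly2 P x y + poly2 Q x y"
  by (simp add: poly2_def map_poly_eval_add)

lemma poly2_mult: "poly2 (P * Q) x y = poly2 P x y * poly2 Q x y"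
  by (simp add: poly2_def map_poly_eval_mult)

lemma poly2_const: "poly2 [:[:c:]:] x y = c"
  by (simp add: poly2_def map_poly_pCons)

lemma poly2_X: "poly2 [:0, 1:] x y = x"
  by (simp add: poly2_def map_poly_pCons)

lemma poly2_Y: "poly2 [:[:0, 1:]:] x y = y"
  by (simp add: poly2_def map_poly_pCons)

lemma poly2_0: "poly2 0 x y = 0"
  by (simp add: poly2_def)

definition ispoly :: "(int \<Rightarrow> int \<Rightarrow> complex) \<Rightarrow> bool" where
  "ispoly f \<longleftrightarrow> (\<exists>P. \<forall>n k. f n k = poly2 P (of_int n) (of_int k))"

lemma ispoly_const [intro]: "ispoly (\<lambda>n k. c)"
  unfolding ispoly_def by (rule exI[of _ "[:[:c:]:]"]) (simp add: poly2_const)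

lemma ispoly_n [intro]: "ispoly (\<lambda>n k. of_int n)"
  unfolding ispoly_def by (rule exI[of _ "[:0,1:]"]) (simp add: poly2_X)

lemma ispoly_k [intro]: "ispoly (\<lambda>n k. of_int k)"
  unfolding ispoly_def by (rule exI[of _ "[:[:0,1:]:]"]) (simp add: poly2_Y)

lemma ispoly_add [intro]: "ispoly f \<Longrightarrow> ispoly g \<Longrightarrow> ispoly (\<lambda>n k. f n k + g n k)"
  unfolding ispoly_def by (metis poly2_add)

lemma ispoly_mult [intro]: "ispoly f \<Longrightarrow> ispoly g \<Longrightarrow> ispoly (\<lambda>n k. f n k * g n k)"
  unfolding ispoly_def by (metis poly2_mult)

lemma ispoly_uminus [intro]: "ispoly f \<Longrightarrow> ispoly (\<lambda>n k. - f n k)"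
proof -
  assume "ispoly f"
  then have "ispoly (\<lambda>n k. (-1) * f n k)" by (intro ispoly_mult ispoly_const)
  then show ?thesis by simp
qed

lemma ispoly_diff [intro]: "ispoly f \<Longrightarrow> ispoly g \<Longrightarrow> ispoly (\<lambda>n k. f n k - g n k)"
proof -
  assume "ispoly f" "ispoly g"
  then have "ispoly (\<lambda>n k. f n k + - g n k)" by (intro ispoly_add ispoly_uminus)
  then show ?thesis by simp
qed

lemma ispoly_sum [intro]: "(\<And>j. ispoly (f j)) \<Longrightarrow> ispoly (\<lambda>n k. \<Sum>j<(m::nat). f j n k)"
proof (induction m)
  case 0 then show ?case by (simp add: ispoly_const)
next
  case (Suc m) then show ?case by (simp add: ispoly_add)
qed

lemma ispoly_pochhammer [intro]: "ispoly f \<Longrightarrow> ispoly (\<lambda>n k. pochhammer (f n k) m)"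
proof (induction m)
  case 0 then show ?case by (simp add: ispoly_const)
next
  case (Suc m) then show ?case by (simp add: pochhammer_Suc ispoly_mult ispoly_add ispoly_const)
qed

definition hdir :: "(int \<Rightarrow> int \<Rightarrow> complex) \<Rightarrow> (int \<Rightarrow> int \<Rightarrow> complex) \<Rightarrow> bool" where
  "hdir f f' \<longleftrightarrow> (\<exists>p q. q \<noteq> 0 \<and> (\<forall>n k. poly2 q (of_int n) (of_int k) * f' n k
                                  = poly2 p (of_int n) (of_int k) * f n k))"

lemma hyp2_iff: "hypergeometric2 H \<longleftrightarrow> hdir H (\<lambda>n k. H (n+1) k) \<and> hdir H (\<lambda>n k. H n (k+1))"
  unfolding hypergeometric2_def hdir_def by simp

lemma hdir_mult:
  assumes "hdir f f'" "hdir g g'"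
  shows "hdir (\<lambda>n k. f n k * g n k) (\<lambda>n k. f' n k * g' n k)"
proof -
  obtain p1 q1 where 1: "q1 \<noteq> 0" "\<And>n k. poly2 q1 (of_int n) (of_int k) * f' n k
                                  = poly2 p1 (of_int n) (of_int k) * f n k"
    using assms(1) unfolding hdir_def by blast
  obtain p2 q2 where 2: "q2 \<noteq> 0" "\<And>n k. poly2 q2 (of_int n) (of_int k) * g' n k
                                  = poly2 p2 (of_int n) (of_int k) * g n k"
    using assms(2) unfolding hdir_def by blast
  show ?thesis unfolding hdir_def
  proof (rule exI[of _ "p1 * p2"], rule exI[of _ "q1 * q2"], intro conjI allI)
    show "q1 * q2 \<noteq> 0" using 1 2 by simp
    fix n k
    have "poly2 (q1 * q2) (of_int n) (of_int k) * (f' n k * g' n k)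
        = (poly2 q1 (of_int n) (of_int k) * f' n k) * (poly2 q2 (of_int n) (of_int k) * g' n k)"
      by (simp add: poly2_mult algebra_simps)
    also have "\<dots> = (poly2 p1 (of_int n) (of_int k) * f n k) * (poly2 p2 (of_int n) (of_int k) * g n k)"
      using 1 2 by simp
    also have "\<dots> = poly2 (p1 * p2) (of_int n) (of_int k) * (f n k * g n k)"
      by (simp add: poly2_mult algebra_simps)
    finally show "poly2 (q1 * q2) (of_int n) (of_int k) * (f' n k * g' n k)
        = poly2 (p1 * p2) (of_int n) (of_int k) * (f n k * g n k)" .
  qed
qed

lemma hyp2_mult: "hypergeometric2 f \<Longrightarrow> hypergeometric2 g \<Longrightarrow> hypergeometric2 (\<lambda>n k. f n k * g n k)"
  unfolding hyp2_iff using hdir_mult by blast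

lemma hdirI:
  assumes "ispoly qf" "ispoly pf" "qf n0 k0 \<noteq> 0"
    and "\<And>n k. qf n k * f' n k = pf n k * f n k"
  shows "hdir f f'"
proof -
  obtain q where q: "\<And>n k. qf n k = poly2 q (of_int n) (of_int k)" using assms(1) unfolding ispoly_def by blast
  obtain p where p: "\<And>n k. pf n k = poly2 p (of_int n) (of_int k)" using assms(2) unfolding ispoly_def by blast
  have "q \<noteq> 0" using assms(3) q[of n0 k0] by (auto simp: poly2_0)
  then show ?thesis unfolding hdir_def using assms(4) p q by metis
qed

lemma hdir_ispoly:
  assumes "ispoly f" "ispoly f'" "(\<forall>n k. f n k = 0) \<Longrightarrow> (\<forall>n k. f' n k = 0)"
  shows "hdir f f'"
proof (cases "\<forall>n k. f n k = 0")
  case True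
  show ?thesis by (rule hdirI[of "\<lambda>n k. 1" "\<lambda>n k. 0" 0 0]) (use True assms(3) in auto)
next
  case False
  then obtain n0 k0 where "f n0 k0 \<noteq> 0" by blast
  show ?thesis by (rule hdirI[of f f' n0 k0]) (use assms \<open>f n0 k0 \<noteq> 0\<close> in \<open>auto simp: mult.commute\<close>)
qed



lemma poch_Gamma_shift: "pochhammer z m * Gamma (z + of_nat m) = (pochhammer z m)^2 * Gamma z"
proof (cases "z \<in> \<int>\<^sub>\<le>\<^sub>0")
  case False
  then have "pochhammer z m = Gamma (z + of_nat m) / Gamma z" by (rule pochhammer_Gamma)
  moreover have "Gamma z \<noteq> 0" using False by (simp add: Gamma_eq_zero_iff)
  ultimately show ?thesis by (simp add: power2_eq_square field_simps)
next
  case True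
  then obtain j where j: "z = - of_nat j" by (auto elim!: nonpos_Ints_cases')
  show ?thesis
  proof (cases "j < m")
    case True
    then have "pochhammer z m = 0" using j by (auto simp: pochhammer_eq_0_iff)
    then show ?thesis by simp
  next
    case False
    then have "z + of_nat m = - of_nat (j - m)" using j by (simp add: of_nat_diff)
    then have "Gamma (z + of_nat m) = 0" by (simp add: Gamma_eq_zero_iff)
    moreover have "Gamma z = 0" using True by (simp add: Gamma_eq_zero_iff)
    ultimately show ?thesis by simp
  qed
qed

lemma pochhammer_Re_pos_nz: "Re z > 0 \<Longrightarrow> pochhammer (z::complex) m \<noteq> 0"
  by (auto simp: pochhammer_eq_0_iff)

lemma hdir_Gamma_gen:
  assumes g: "ispoly g" and unb: "\<delta> \<noteq> 0 \<Longrightarrow> \<forall>R. \<exists>n k. R < Re (g n k)"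
  shows "hdir (\<lambda>n k. Gamma (g n k)) (\<lambda>n k. Gamma (g n k + of_int \<delta>))"
proof -
  consider "\<delta> = 0" | "\<delta> > 0" | "\<delta> < 0" by linarith
  then show ?thesis
  proof cases
    case 1
    show ?thesis by (rule hdirI[of "\<lambda>n k. 1" "\<lambda>n k. 1" 0 0]) (use 1 in auto)
  next
    case 2
    define m where "m = nat \<delta>"
    have dm: "of_int \<delta> = (of_nat m :: complex)" using 2 by (simp add: m_def)
    obtain n0 k0 where nk: "0 < Re (g n0 k0)" using unb 2 by force
    show ?thesis
    proof (rule hdirI[of "\<lambda>n k. pochhammer (g n k) m" "\<lambda>n k. (pochhammer (g n k) m)^2" n0 k0])
      show "ispoly (\<lambda>n k. (pochhammer (g n k) m)^2)" unfolding power2_eq_square using g by auto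
    qed (use g nk in \<open>auto simp: dm poch_Gamma_shift pochhammer_Re_pos_nz\<close>)
  next
    case 3
    define m where "m = nat (-\<delta>)"
    have dm: "of_int \<delta> = - (of_nat m :: complex)" using 3 by (simp add: m_def)
    obtain n0 k0 where nk: "of_nat m < Re (g n0 k0)" using unb 3 by force
    have gi: "ispoly (\<lambda>n k. g n k + of_int \<delta>)" using g by auto
    show ?thesis
    proof (rule hdirI[of "\<lambda>n k. (pochhammer (g n k + of_int \<delta>) m)^2" "\<lambda>n k. pochhammer (g n k + of_int \<delta>) m" n0 k0])
      show "ispoly (\<lambda>n k. (pochhammer (g n k + of_int \<delta>) m)^2)" unfolding power2_eq_square using gi by auto
      show "ispoly (\<lambda>n k. pochhammer (g n k + of_int \<delta>) m)" using gi by auto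
      have "Re (g n0 k0 + of_int \<delta>) > 0" using nk by (simp add: dm)
      then show "(pochhammer (g n0 k0 + of_int \<delta>) m)\<^sup>2 \<noteq> 0" by (simp add: pochhammer_Re_pos_nz)
      fix n k
      have e: "g n k = (g n k + of_int \<delta>) + of_nat m" by (simp add: dm)
      show "(pochhammer (g n k + of_int \<delta>) m)\<^sup>2 * Gamma (g n k + of_int \<delta>) =
            pochhammer (g n k + of_int \<delta>) m * Gamma (g n k)"
        by (subst (2) e) (simp add: poch_Gamma_shift)
    qed
  qed
qed

lemma hdir_rGamma_gen:
  assumes g: "ispoly g" and unb: "\<delta> \<noteq> 0 \<Longrightarrow> \<forall>R. \<exists>n k. R < Re (g n k)"
  shows "hdir (\<lambda>n k. rGamma (g n k)) (\<lambda>n k. rGamma (g n k + of_int \<delta>))"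
proof -
  consider "\<delta> \<ge> 0" | "\<delta> < 0" by linarith
  then show ?thesis
  proof cases
    case 1
    define m where "m = nat \<delta>"
    have dm: "of_int \<delta> = (of_nat m :: complex)" using 1 by (simp add: m_def)
    obtain n0 k0 where nk: "m = 0 \<or> 0 < Re (g n0 k0)" using unb 1 m_def by force
    show ?thesis
    proof (rule hdirI[of "\<lambda>n k. pochhammer (g n k) m" "\<lambda>n k. 1" n0 k0])
      show "pochhammer (g n0 k0) m \<noteq> 0" using nk pochhammer_Re_pos_nz by auto
    qed (use g in \<open>auto simp: dm pochhammer_rGamma[symmetric]\<close>)
  next
    case 2
    define m where "m = nat (-\<delta>)"
    have dm: "of_int \<delta> = - (of_nat m :: complex)" using 2 by (simp add: m_def)
    have gi: "ispoly (\<lambda>n k. g n k + of_int \<delta>)" using g by auto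
    show ?thesis
    proof (rule hdirI[of "\<lambda>n k. 1" "\<lambda>n k. pochhammer (g n k + of_int \<delta>) m" 0 0])
      show "ispoly (\<lambda>n k. pochhammer (g n k + of_int \<delta>) m)" using gi by auto
      fix n k
      have e: "g n k = (g n k + of_int \<delta>) + of_nat m" by (simp add: dm)
      show "1 * rGamma (g n k + of_int \<delta>) = pochhammer (g n k + of_int \<delta>) m * rGamma (g n k)"
        by (subst (2) e) (simp add: pochhammer_rGamma[symmetric])
    qed auto
  qed
qed

lemma neg1pow_add: "neg1pow (x + y) = neg1pow x * neg1pow y"
  by (simp add: neg1pow_def distrib_left exp_add)

lemma hdir_neg1pow_gen:
  shows "hdir (\<lambda>n k. neg1pow (g n k)) (\<lambda>n k. neg1pow (g n k + c))"
  by (rule hdirI[of "\<lambda>n k. 1" "\<lambda>n k. neg1pow c" 0 0]) (auto simp: neg1pow_add)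

lemma hdir_const: "hdir (\<lambda>n k. c) (\<lambda>n k. c)"
  by (auto intro!: hdirI[of "\<lambda>n k. 1" "\<lambda>n k. 1" 0 0])

lemma ispoly_aff [intro]: "ispoly (\<lambda>n k. of_int \<alpha> * of_int n + of_int \<beta> * of_int k + \<gamma>)"
  by (intro ispoly_add ispoly_mult ispoly_const ispoly_n ispoly_k)

lemma aff_unb:
  assumes "\<alpha> \<noteq> 0 \<or> \<beta> \<noteq> 0"
  shows "\<forall>R. \<exists>n k. R < Re (of_int \<alpha> * of_int n + of_int \<beta> * of_int k + (\<gamma>::complex))"
proof
  fix R :: real
  define N where "N = \<lceil>\<bar>R\<bar> + \<bar>Re \<gamma>\<bar>\<rceil> + 1"
  have N: "real_of_int N > \<bar>R\<bar> + \<bar>Re \<gamma>\<bar>" unfolding N_def by linarith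
  show "\<exists>n k. R < Re (of_int \<alpha> * of_int n + of_int \<beta> * of_int k + \<gamma>)"
  proof (cases "\<alpha> \<noteq> 0")
    case True
    have "real_of_int (\<alpha> * \<alpha>) \<ge> 1" using True
      by (metis int_one_le_iff_zero_less not_square_less_zero of_int_1_le_iff zero_less_mult_iff
          linorder_neqE_linordered_idom mult_neg_neg)
    then have "real_of_int (\<alpha> * \<alpha>) * real_of_int N \<ge> real_of_int N"
      using N by (simp add: mult_le_cancel_right1)
    then have "R < Re (of_int \<alpha> * of_int (\<alpha> * N) + of_int \<beta> * of_int 0 + \<gamma>)"
      using N by (simp add: mult.assoc[symmetric])
    then show ?thesis by blast
  next
    case False
    then have b: "\<beta> \<noteq> 0" using assms by simp
    have "real_of_int (\<beta> * \<beta>) \<ge> 1" using b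
      by (metis int_one_le_iff_zero_less not_square_less_zero of_int_1_le_iff zero_less_mult_iff
          linorder_neqE_linordered_idom mult_neg_neg)
    then have "real_of_int (\<beta> * \<beta>) * real_of_int N \<ge> real_of_int N"
      using N by (simp add: mult_le_cancel_right1)
    then have "R < Re (of_int \<alpha> * of_int 0 + of_int \<beta> * of_int (\<beta> * N) + \<gamma>)"
      using N by (simp add: mult.assoc[symmetric])
    then show ?thesis by blast
  qed
qed

lemma hyp2_Gamma_aff:
  "hypergeometric2 (\<lambda>n k. Gamma (of_int \<alpha> * of_int n + of_int \<beta> * of_int k + \<gamma>))"
proof -
  let ?g = "\<lambda>n k. of_int \<alpha> * of_int n + of_int \<beta> * of_int k + (\<gamma>::complex)"
  have 1: "hdir (\<lambda>n k. Gamma (?g n k)) (\<lambda>n k. Gamma (?g n k + of_int \<alpha>))"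
    by (rule hdir_Gamma_gen) (use aff_unb in auto)
  have 2: "hdir (\<lambda>n k. Gamma (?g n k)) (\<lambda>n k. Gamma (?g n k + of_int \<beta>))"
    by (rule hdir_Gamma_gen) (use aff_unb in auto)
  have e1: "(\<lambda>n k. Gamma (?g (n+1) k)) = (\<lambda>n k. Gamma (?g n k + of_int \<alpha>))"
    by (simp add: algebra_simps)
  have e2: "(\<lambda>n k. Gamma (?g n (k+1))) = (\<lambda>n k. Gamma (?g n k + of_int \<beta>))"
    by (simp add: algebra_simps)
  show ?thesis unfolding hyp2_iff using 1 2 e1 e2 by simp
qed

lemma hyp2_rGamma_aff:
  "hypergeometric2 (\<lambda>n k. rGamma (of_int \<alpha> * of_int n + of_int \<beta> * of_int k + \<gamma>))"
proof -
  let ?g = "\<lambda>n k. of_int \<alpha> * of_int n + of_int \<beta> * of_int k + (\<gamma>::complex)"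
  have 1: "hdir (\<lambda>n k. rGamma (?g n k)) (\<lambda>n k. rGamma (?g n k + of_int \<alpha>))"
    by (rule hdir_rGamma_gen) (use aff_unb in auto)
  have 2: "hdir (\<lambda>n k. rGamma (?g n k)) (\<lambda>n k. rGamma (?g n k + of_int \<beta>))"
    by (rule hdir_rGamma_gen) (use aff_unb in auto)
  have e1: "(\<lambda>n k. rGamma (?g (n+1) k)) = (\<lambda>n k. rGamma (?g n k + of_int \<alpha>))"
    by (simp add: algebra_simps)
  have e2: "(\<lambda>n k. rGamma (?g n (k+1))) = (\<lambda>n k. rGamma (?g n k + of_int \<beta>))"
    by (simp add: algebra_simps)
  show ?thesis unfolding hyp2_iff using 1 2 e1 e2 by simp
qed

lemma hyp2_neg1pow_aff:
  "hypergeometric2 (\<lambda>n k. neg1pow (of_int \<alpha> * of_int n + of_int \<beta> * of_int k + \<gamma>))"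
proof -
  let ?g = "\<lambda>n k. of_int \<alpha> * of_int n + of_int \<beta> * of_int k + (\<gamma>::complex)"
  have e1: "(\<lambda>n k. neg1pow (?g (n+1) k)) = (\<lambda>n k. neg1pow (?g n k + of_int \<alpha>))"
    by (simp add: algebra_simps)
  have e2: "(\<lambda>n k. neg1pow (?g n (k+1))) = (\<lambda>n k. neg1pow (?g n k + of_int \<beta>))"
    by (simp add: algebra_simps)
  show ?thesis unfolding hyp2_iff e1 e2 by (simp add: hdir_neg1pow_gen)
qed

lemma hyp2_const: "hypergeometric2 (\<lambda>n k. c)"
  unfolding hyp2_iff by (simp add: hdir_const)

lemma hyp2_ispoly:
  assumes "ispoly f" "\<And>dn dk. ispoly (\<lambda>n k. f (n + dn) (k + dk))"
  shows "hypergeometric2 f"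
proof -
  have z: "(\<forall>n k. f n k = 0) \<Longrightarrow> (\<forall>n k. f (n + dn) (k + dk) = 0)" for dn dk by simp
  show ?thesis unfolding hyp2_iff
    using hdir_ispoly[OF assms(1) assms(2)[of 1 0] z[of 1 0]]
          hdir_ispoly[OF assms(1) assms(2)[of 0 1] z[of 0 1]] by simp
qed



definition M :: "complex \<Rightarrow> complex \<Rightarrow> complex \<Rightarrow> complex \<Rightarrow> complex \<Rightarrow> complex" where
  "M d k a b c = Gamma (a+k) * Gamma (b+k) * Gamma (c+k) * Gamma (a+b+c-3*d+3/2) *
     (rGamma (2*d-a+k) * rGamma (2*d-b+k) * rGamma (2*d-c+k)) *
     (rGamma (a+b-2*d+2) * rGamma (a+c-2*d+2) * rGamma (b+c-2*d+2)) *
     (rGamma (a-d+3/2) * rGamma (b-d+3/2) * rGamma (c-d+3/2)) * neg1pow (a+b+c+d)"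

definition fpoly :: "complex \<Rightarrow> complex \<Rightarrow> complex \<Rightarrow> complex \<Rightarrow> complex \<Rightarrow> complex" where
  "fpoly d k a b c = (a+b-2*d+1)*(a+c-2*d+1)*(b+c-2*d+1)*(a-d+1/2)*(b-d+1/2)*(c-d+1/2)"

definition gapoly :: "complex \<Rightarrow> complex \<Rightarrow> complex \<Rightarrow> complex \<Rightarrow> complex \<Rightarrow> complex" where
  "gapoly d k a b c = -1/2 * ((2*d-a+k-1)*(2*d-b+k-1)*(2*d-c+k-1)*(b+c-2*d+1)*(b-d+1/2)*(c-d+1/2))"

definition Ga :: "complex \<Rightarrow> complex \<Rightarrow> complex \<Rightarrow> complex \<Rightarrow> complex \<Rightarrow> complex" where
  "Ga d k a b c = gapoly d k a b c * M d k a b c"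

lemma rG_step: "w = z + 1 \<Longrightarrow> rGamma z = z * rGamma w"
  using rGamma_plus1[of z] by simp

lemma G_step: "w = z + 1 \<Longrightarrow> z \<notin> \<int>\<^sub>\<le>\<^sub>0 \<Longrightarrow> Gamma w = z * Gamma z"
  using Gamma_plus1[of z] by simp

lemma neg1pow_plus1: "neg1pow (z + 1) = - neg1pow z"
  by (simp add: neg1pow_def distrib_left exp_add)

lemma div_Gamma3: "x / (Gamma p * Gamma q * Gamma r) = x * rGamma p * rGamma q * rGamma r"
  by (simp add: divide_inverse rGamma_inverse_Gamma mult.assoc)

lemma F0_M: "F0 k a b c d = fpoly d k a b c * M d k a b c"
proof -
  have 1: "rGamma (a+b-2*d+1) = (a+b-2*d+1) * rGamma (a+b-2*d+2)" by (rule rG_step) simp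
  have 2: "rGamma (a+c-2*d+1) = (a+c-2*d+1) * rGamma (a+c-2*d+2)" by (rule rG_step) simp
  have 3: "rGamma (b+c-2*d+1) = (b+c-2*d+1) * rGamma (b+c-2*d+2)" by (rule rG_step) simp
  have 4: "rGamma (a-d+1/2) = (a-d+1/2) * rGamma (a-d+3/2)" by (rule rG_step) simp
  have 5: "rGamma (b-d+1/2) = (b-d+1/2) * rGamma (b-d+3/2)" by (rule rG_step) simp
  have 6: "rGamma (c-d+1/2) = (c-d+1/2) * rGamma (c-d+3/2)" by (rule rG_step) simp
  show ?thesis
    unfolding F0_def M_def fpoly_def div_Gamma3 1 2 3 4 5 6 by (simp only: mult_ac)
qed

lemma M_sym_ab: "M d k b a c = M d k a b c"
proof -
  have h: "b+a-2*d+2 = a+b-2*d+2" "b+a+c-3*d+3/2 = a+b+c-3*d+3/2" "b+a+c+d = a+b+c+d"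
    by simp_all
  show ?thesis unfolding M_def h by (simp only: mult_ac)
qed

lemma M_sym_ac: "M d k c b a = M d k a b c"
proof -
  have h: "c+b-2*d+2 = b+c-2*d+2" "c+a-2*d+2 = a+c-2*d+2" "b+a-2*d+2 = a+b-2*d+2"
     "c+b+a-3*d+3/2 = a+b+c-3*d+3/2" "c+b+a+d = a+b+c+d"
    by simp_all
  show ?thesis unfolding M_def h by (simp only: mult_ac)
qed

lemma fpoly_sym_ab: "fpoly d k b a c = fpoly d k a b c"
proof -
  have h: "b+a-2*d+1 = a+b-2*d+1" by simp
  show ?thesis unfolding fpoly_def h by (simp only: mult_ac)
qed

lemma fpoly_sym_ac: "fpoly d k c b a = fpoly d k a b c"
proof -
  have h: "c+b-2*d+1 = b+c-2*d+1" "c+a-2*d+1 = a+c-2*d+1" "b+a-2*d+1 = a+b-2*d+1" by simp_all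
  show ?thesis unfolding fpoly_def h by (simp only: mult_ac)
qed

lemma F0_sym_ab: "F0 k b a c d = F0 k a b c d"
  by (simp only: F0_M M_sym_ab[of d k a b c] fpoly_sym_ab[of d k a b c])

lemma F0_sym_ac: "F0 k c b a d = F0 k a b c d"
  by (simp only: F0_M M_sym_ac[of d k a b c] fpoly_sym_ac[of d k a b c])

lemma unit_a:
  assumes "F0_defined k a b c d"
  shows "F0 k (a+1) b c d - F0 k a b c d = Ga d (k+1) a b c - Ga d k a b c"
proof -
  have np: "a + k \<notin> \<int>\<^sub>\<le>\<^sub>0" "b + k \<notin> \<int>\<^sub>\<le>\<^sub>0" "c + k \<notin> \<int>\<^sub>\<le>\<^sub>0" "a+b+c-3*d+3/2 \<notin> \<int>\<^sub>\<le>\<^sub>0"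
    using assms unfolding F0_defined_def by auto
  define s where "s = a+b+c-3*d+3/2"
  define \<Omega> where "\<Omega> = Gamma (a+k) * Gamma (b+k) * Gamma (c+k) * Gamma s *
     (rGamma (2*d-a+k+1) * rGamma (2*d-b+k+1) * rGamma (2*d-c+k+1)) *
     (rGamma (a+b-2*d+3) * rGamma (a+c-2*d+3) * rGamma (b+c-2*d+2)) *
     (rGamma (a-d+5/2) * rGamma (b-d+3/2) * rGamma (c-d+3/2)) * neg1pow (a+b+c+d)"
  have r1: "rGamma (2*d-a+k) = (2*d-a+k) * rGamma (2*d-a+k+1)" by (rule rG_step) simp
  have r2: "rGamma (2*d-b+k) = (2*d-b+k) * rGamma (2*d-b+k+1)" by (rule rG_step) simp
  have r3: "rGamma (2*d-c+k) = (2*d-c+k) * rGamma (2*d-c+k+1)" by (rule rG_step) simp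
  have r4: "rGamma (a+b-2*d+2) = (a+b-2*d+2) * rGamma (a+b-2*d+3)" by (rule rG_step) simp
  have r5: "rGamma (a+c-2*d+2) = (a+c-2*d+2) * rGamma (a+c-2*d+3)" by (rule rG_step) simp
  have r6: "rGamma (a-d+3/2) = (a-d+3/2) * rGamma (a-d+5/2)" by (rule rG_step) simp
  have r7: "rGamma (2*d-(a+1)+k) = (2*d-(a+1)+k) * rGamma (2*d-a+k)" by (rule rG_step) simp
  define T where "T = (2*d-a+k)*(2*d-b+k)*(2*d-c+k)"
  define E where "E = (a+b-2*d+2)*(a+c-2*d+2)*(a-d+3/2)"
  define E0 where "E0 = (a+b-2*d+1)*(a+c-2*d+1)*(a-d+1/2)"
  define C where "C = (b+c-2*d+1)*(b-d+1/2)*(c-d+1/2)"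
  define U where "U = (2*d-a+k-1)*(2*d-b+k-1)*(2*d-c+k-1)"
  define V where "V = (a+k)*(b+k)*(c+k)"
  define w where "w = 2*d-(a+1)+k"
  have M0: "M d k a b c = \<Omega> * (T * E)"
    unfolding M_def \<Omega>_def s_def T_def E_def r1 r2 r3 r4 r5 r6 by (simp only: mult_ac)
  have g1: "Gamma (a+1+k) = (a+k) * Gamma (a+k)" by (rule G_step) (use np in simp_all)
  have g2: "Gamma (a+1+b+c-3*d+3/2) = s * Gamma s" unfolding s_def by (rule G_step) (use np in simp_all)
  have e1: "a+1+b-2*d+2 = a+b-2*d+3" "a+1+c-2*d+2 = a+c-2*d+3" "a+1-d+3/2 = a-d+5/2"
    by simp_all
  have e2: "neg1pow (a+1+b+c+d) = - neg1pow (a+b+c+d)"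
    using neg1pow_plus1[of "a+b+c+d"] by (simp add: ac_simps)
  have M1: "M d k (a+1) b c = - (\<Omega> * ((a+k) * s * w * T))"
    unfolding M_def \<Omega>_def g1 g2 e1 e2 r7 r1 r2 r3 T_def w_def
    by (simp only: mult_ac mult_minus_left mult_minus_right)
  have g3: "Gamma (a+(k+1)) = (a+k) * Gamma (a+k)" by (rule G_step) (use np in simp_all)
  have g4: "Gamma (b+(k+1)) = (b+k) * Gamma (b+k)" by (rule G_step) (use np in simp_all)
  have g5: "Gamma (c+(k+1)) = (c+k) * Gamma (c+k)" by (rule G_step) (use np in simp_all)
  have e3: "2*d-a+(k+1) = 2*d-a+k+1" "2*d-b+(k+1) = 2*d-b+k+1" "2*d-c+(k+1) = 2*d-c+k+1"
    by simp_all
  have M2: "M d (k+1) a b c = \<Omega> * (V * E)"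
    unfolding M_def \<Omega>_def s_def V_def E_def g3 g4 g5 e3 r4 r5 r6 by (simp only: mult_ac)
  have f1: "fpoly d k (a+1) b c = E * C"
  proof -
    have q: "a+1+b-2*d+1 = a+b-2*d+2" "a+1+c-2*d+1 = a+c-2*d+2" "a+1-d+1/2 = a-d+3/2" by simp_all
    show ?thesis unfolding fpoly_def E_def C_def q by (simp only: mult_ac)
  qed
  have f0: "fpoly d k a b c = E0 * C"
    unfolding fpoly_def E0_def C_def by (simp only: mult_ac)
  have ga1: "gapoly d (k+1) a b c = -1/2 * (T * C)"
  proof -
    have q: "2*d-a+(k+1)-1 = 2*d-a+k" "2*d-b+(k+1)-1 = 2*d-b+k" "2*d-c+(k+1)-1 = 2*d-c+k" by simp_all
    show ?thesis unfolding gapoly_def T_def C_def q by (simp only: mult_ac)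
  qed
  have ga0: "gapoly d k a b c = -1/2 * (U * C)"
    unfolding gapoly_def U_def C_def by (simp only: mult_ac)
  have cubic: "-((a+k) * s * w) - E0 = -1/2 * (V - U)"
    unfolding s_def w_def E0_def V_def U_def by (simp add: algebra_simps field_simps)
  have "F0 k (a+1) b c d - F0 k a b c d = C * E * T * \<Omega> * (-((a+k) * s * w) - E0)"
    unfolding F0_M M0 M1 f1 f0 by (simp add: algebra_simps)
  also have "\<dots> = C * E * T * \<Omega> * (-1/2 * (V - U))" by (simp only: cubic)
  also have "\<dots> = Ga d (k+1) a b c - Ga d k a b c"
    unfolding Ga_def M0 M2 ga1 ga0 by (simp add: algebra_simps field_simps)
  finally show ?thesis .
qed



definition Gb :: "complex \<Rightarrow> complex \<Rightarrow> complex \<Rightarrow> complex \<Rightarrow> complex \<Rightarrow> complex" where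
  "Gb d k a b c = Ga d k b a c"
definition Gc :: "complex \<Rightarrow> complex \<Rightarrow> complex \<Rightarrow> complex \<Rightarrow> complex \<Rightarrow> complex" where
  "Gc d k a b c = Ga d k c b a"

lemma F0_defined_sym_ab: "F0_defined k b a c d \<longleftrightarrow> F0_defined k a b c d"
proof -
  have h: "b+a+c-3*d+3/2 = a+b+c-3*d+3/2" by simp
  show ?thesis unfolding F0_defined_def h by blast
qed

lemma F0_defined_sym_ac: "F0_defined k c b a d \<longleftrightarrow> F0_defined k a b c d"
proof -
  have h: "c+b+a-3*d+3/2 = a+b+c-3*d+3/2" by simp
  show ?thesis unfolding F0_defined_def h by blast
qed

lemma unit_b:
  assumes "F0_defined k a b c d"
  shows "F0 k a (b+1) c d - F0 k a b c d = Gb d (k+1) a b c - Gb d k a b c"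
  using unit_a[of k b a c d] assms
  by (simp add: F0_defined_sym_ab F0_sym_ab[of k a "b+1" c d] F0_sym_ab[of k a b c d] Gb_def)

lemma unit_c:
  assumes "F0_defined k a b c d"
  shows "F0 k a b (c+1) d - F0 k a b c d = Gc d (k+1) a b c - Gc d k a b c"
  using unit_a[of k c b a d] assms
  by (simp add: F0_defined_sym_ac F0_sym_ac[of k a b "c+1" d] F0_sym_ac[of k a b c d] Gc_def)

lemma nonpos_shift: "z \<notin> \<int>\<^sub>\<le>\<^sub>0 \<Longrightarrow> z + of_nat m \<notin> (\<int>\<^sub>\<le>\<^sub>0 :: complex set)"
proof
  assume "z \<notin> \<int>\<^sub>\<le>\<^sub>0" "z + of_nat m \<in> \<int>\<^sub>\<le>\<^sub>0"
  then obtain j where "z + of_nat m = - of_nat j" by (auto elim!: nonpos_Ints_cases')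
  then have "z = - of_nat (j + m)" by (simp add: algebra_simps)
  then have "z \<in> \<int>\<^sub>\<le>\<^sub>0" by (simp only: minus_of_nat_in_nonpos_Ints)
  then show False using \<open>z \<notin> \<int>\<^sub>\<le>\<^sub>0\<close> by simp
qed

lemma F0_defined_mono:
  assumes "F0_defined k a b c d"
  shows "F0_defined (k + of_nat i) (a + of_nat ja) (b + of_nat jb) (c + of_nat jc) d"
proof -
  have e: "a + of_nat ja + (k + of_nat i) = (a + k) + of_nat (ja + i)"
          "b + of_nat jb + (k + of_nat i) = (b + k) + of_nat (jb + i)"
          "c + of_nat jc + (k + of_nat i) = (c + k) + of_nat (jc + i)"
          "a + of_nat ja + (b + of_nat jb) + (c + of_nat jc) - 3*d + 3/2
             = (a+b+c-3*d+3/2) + of_nat (ja + jb + jc)" by (simp_all add: algebra_simps)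
  have x: "a + k \<notin> \<int>\<^sub>\<le>\<^sub>0" "b + k \<notin> \<int>\<^sub>\<le>\<^sub>0" "c + k \<notin> \<int>\<^sub>\<le>\<^sub>0" "a+b+c-3*d+3/2 \<notin> \<int>\<^sub>\<le>\<^sub>0"
    using assms unfolding F0_defined_def by auto
  show ?thesis unfolding F0_defined_def e
    using nonpos_shift[OF x(1), of "ja+i"] nonpos_shift[OF x(2), of "jb+i"]
      nonpos_shift[OF x(3), of "jc+i"] nonpos_shift[OF x(4), of "ja+jb+jc"] by blast
qed

definition H :: "complex \<Rightarrow> nat \<Rightarrow> nat \<Rightarrow> nat \<Rightarrow> nat \<Rightarrow> complex \<Rightarrow> complex \<Rightarrow> complex \<Rightarrow> complex \<Rightarrow> complex" where
  "H d \<kappa> \<alpha> \<beta> \<gamma> k a b c =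
     (\<Sum>j<\<kappa>. F0 (k + of_nat j) a b c d)
   + (\<Sum>j<\<alpha>. Ga d (k + of_nat \<kappa>) (a + of_nat j) b c)
   + (\<Sum>j<\<beta>. Gb d (k + of_nat \<kappa>) (a + of_nat \<alpha>) (b + of_nat j) c)
   + (\<Sum>j<\<gamma>. Gc d (k + of_nat \<kappa>) (a + of_nat \<alpha>) (b + of_nat \<beta>) (c + of_nat j))"

lemma sum4_diff: "(x1+x2+x3+x4) - (y1+y2+y3+y4) = (x1-y1)+(x2-y2)+(x3-y3)+((x4::complex)-y4)"
  by (simp add: algebra_simps)

lemma UP:
  assumes np: "F0_defined k a b c d"
  shows "F0 (k + of_nat \<kappa>) (a + of_nat \<alpha>) (b + of_nat \<beta>) (c + of_nat \<gamma>) d - F0 k a b c d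
       = H d \<kappa> \<alpha> \<beta> \<gamma> (k+1) a b c - H d \<kappa> \<alpha> \<beta> \<gamma> k a b c"
proof -
  let ?k = "k + of_nat \<kappa>" and ?a = "a + of_nat \<alpha>" and ?b = "b + of_nat \<beta>"
  have s1: "(\<Sum>j<\<kappa>. F0 (k + 1 + of_nat j) a b c d) - (\<Sum>j<\<kappa>. F0 (k + of_nat j) a b c d)
        = F0 ?k a b c d - F0 k a b c d"
  proof -
    have "(\<Sum>j<\<kappa>. F0 (k + 1 + of_nat j) a b c d) - (\<Sum>j<\<kappa>. F0 (k + of_nat j) a b c d)
        = (\<Sum>j<\<kappa>. F0 (k + of_nat (Suc j)) a b c d - F0 (k + of_nat j) a b c d)"
      by (simp add: sum_subtractf algebra_simps)
    also have "\<dots> = F0 ?k a b c d - F0 k a b c d"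
      by (subst sum_lessThan_telescope[where f = "\<lambda>j. F0 (k + of_nat j) a b c d"]) simp
    finally show ?thesis .
  qed
  have s2: "(\<Sum>j<\<alpha>. Ga d (k + 1 + of_nat \<kappa>) (a + of_nat j) b c) - (\<Sum>j<\<alpha>. Ga d ?k (a + of_nat j) b c)
        = F0 ?k ?a b c d - F0 ?k a b c d"
  proof -
    have "(\<Sum>j<\<alpha>. Ga d (k + 1 + of_nat \<kappa>) (a + of_nat j) b c) - (\<Sum>j<\<alpha>. Ga d ?k (a + of_nat j) b c)
        = (\<Sum>j<\<alpha>. Ga d (?k + 1) (a + of_nat j) b c - Ga d ?k (a + of_nat j) b c)"
      by (simp add: sum_subtractf algebra_simps)
    also have "\<dots> = (\<Sum>j<\<alpha>. F0 ?k (a + of_nat (Suc j)) b c d - F0 ?k (a + of_nat j) b c d)"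
    proof (rule sum.cong[OF refl])
      fix j assume "j \<in> {..<\<alpha>}"
      have "F0_defined ?k (a + of_nat j) (b + of_nat 0) (c + of_nat 0) d" by (rule F0_defined_mono[OF np])
      then have "F0_defined ?k (a + of_nat j) b c d" by simp
      from unit_a[OF this] show "Ga d (?k + 1) (a + of_nat j) b c - Ga d ?k (a + of_nat j) b c
          = F0 ?k (a + of_nat (Suc j)) b c d - F0 ?k (a + of_nat j) b c d"
        by (simp add: algebra_simps)
    qed
    also have "\<dots> = F0 ?k ?a b c d - F0 ?k a b c d"
      by (subst sum_lessThan_telescope[where f = "\<lambda>j. F0 ?k (a + of_nat j) b c d"]) simp
    finally show ?thesis .
  qed
  have s3: "(\<Sum>j<\<beta>. Gb d (k + 1 + of_nat \<kappa>) ?a (b + of_nat j) c) - (\<Sum>j<\<beta>. Gb d ?k ?a (b + of_nat j) c)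
        = F0 ?k ?a ?b c d - F0 ?k ?a b c d"
  proof -
    have "(\<Sum>j<\<beta>. Gb d (k + 1 + of_nat \<kappa>) ?a (b + of_nat j) c) - (\<Sum>j<\<beta>. Gb d ?k ?a (b + of_nat j) c)
        = (\<Sum>j<\<beta>. Gb d (?k + 1) ?a (b + of_nat j) c - Gb d ?k ?a (b + of_nat j) c)"
      by (simp add: sum_subtractf algebra_simps)
    also have "\<dots> = (\<Sum>j<\<beta>. F0 ?k ?a (b + of_nat (Suc j)) c d - F0 ?k ?a (b + of_nat j) c d)"
    proof (rule sum.cong[OF refl])
      fix j assume "j \<in> {..<\<beta>}"
      have "F0_defined ?k ?a (b + of_nat j) (c + of_nat 0) d" by (rule F0_defined_mono[OF np])
      then have "F0_defined ?k ?a (b + of_nat j) c d" by simp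
      from unit_b[OF this] show "Gb d (?k + 1) ?a (b + of_nat j) c - Gb d ?k ?a (b + of_nat j) c
          = F0 ?k ?a (b + of_nat (Suc j)) c d - F0 ?k ?a (b + of_nat j) c d"
        by (simp add: algebra_simps)
    qed
    also have "\<dots> = F0 ?k ?a ?b c d - F0 ?k ?a b c d"
      by (subst sum_lessThan_telescope[where f = "\<lambda>j. F0 ?k ?a (b + of_nat j) c d"]) simp
    finally show ?thesis .
  qed
  have s4: "(\<Sum>j<\<gamma>. Gc d (k + 1 + of_nat \<kappa>) ?a ?b (c + of_nat j)) - (\<Sum>j<\<gamma>. Gc d ?k ?a ?b (c + of_nat j))
        = F0 ?k ?a ?b (c + of_nat \<gamma>) d - F0 ?k ?a ?b c d"
  proof -
    have "(\<Sum>j<\<gamma>. Gc d (k + 1 + of_nat \<kappa>) ?a ?b (c + of_nat j)) - (\<Sum>j<\<gamma>. Gc d ?k ?a ?b (c + of_nat j))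
        = (\<Sum>j<\<gamma>. Gc d (?k + 1) ?a ?b (c + of_nat j) - Gc d ?k ?a ?b (c + of_nat j))"
      by (simp add: sum_subtractf algebra_simps)
    also have "\<dots> = (\<Sum>j<\<gamma>. F0 ?k ?a ?b (c + of_nat (Suc j)) d - F0 ?k ?a ?b (c + of_nat j) d)"
    proof (rule sum.cong[OF refl])
      fix j assume "j \<in> {..<\<gamma>}"
      have "F0_defined ?k ?a ?b (c + of_nat j) d" by (rule F0_defined_mono[OF np])
      from unit_c[OF this] show "Gc d (?k + 1) ?a ?b (c + of_nat j) - Gc d ?k ?a ?b (c + of_nat j)
          = F0 ?k ?a ?b (c + of_nat (Suc j)) d - F0 ?k ?a ?b (c + of_nat j) d"
        by (simp add: algebra_simps)
    qed
    also have "\<dots> = F0 ?k ?a ?b (c + of_nat \<gamma>) d - F0 ?k ?a ?b c d"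
      by (subst sum_lessThan_telescope[where f = "\<lambda>j. F0 ?k ?a ?b (c + of_nat j) d"]) simp
    finally show ?thesis .
  qed
  have g: "\<And>x1 x2 x3 x4 y1 y2 y3 y4 :: complex. (x1+x2+x3+x4) - (y1+y2+y3+y4) = (x1-y1)+(x2-y2)+(x3-y3)+(x4-y4)"
    by (simp add: algebra_simps)
  show ?thesis unfolding H_def sum4_diff s1 s2 s3 s4 by simp
qed



definition Mb :: "complex \<Rightarrow> complex \<Rightarrow> complex \<Rightarrow> complex \<Rightarrow> complex \<Rightarrow> int \<Rightarrow> int \<Rightarrow> int \<Rightarrow> int \<Rightarrow> int \<Rightarrow> complex" where
  "Mb d k a b c ox oy oz os L =
     Gamma (a+k+ of_int ox) * Gamma (b+k+ of_int oy) * Gamma (c+k+ of_int oz) * Gamma (a+b+c-3*d+3/2+ of_int os) *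
     (rGamma (2*d-a+k+ of_int L) * rGamma (2*d-b+k+ of_int L) * rGamma (2*d-c+k+ of_int L)) *
     (rGamma (a+b-2*d+2+ of_int L) * rGamma (a+c-2*d+2+ of_int L) * rGamma (b+c-2*d+2+ of_int L)) *
     (rGamma (a-d+3/2+ of_int L) * rGamma (b-d+3/2+ of_int L) * rGamma (c-d+3/2+ of_int L)) * neg1pow (a+b+c+d)"

definition W :: "complex \<Rightarrow> complex \<Rightarrow> complex \<Rightarrow> complex \<Rightarrow> complex \<Rightarrow> int \<Rightarrow> int \<Rightarrow> int \<Rightarrow> int \<Rightarrow> int \<Rightarrow> int \<Rightarrow> int \<Rightarrow> int \<Rightarrow> int \<Rightarrow> complex" where
  "W d k a b c i ja jb jc ox oy oz os L =
     pochhammer (a+k+ of_int ox) (nat (i+ja-ox)) * pochhammer (b+k+ of_int oy) (nat (i+jb-oy)) *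
     pochhammer (c+k+ of_int oz) (nat (i+jc-oz)) * pochhammer (a+b+c-3*d+3/2+ of_int os) (nat (ja+jb+jc-os)) *
     (pochhammer (2*d-a+k+ of_int (i-ja)) (nat (L-(i-ja))) * pochhammer (2*d-b+k+ of_int (i-jb)) (nat (L-(i-jb))) *
      pochhammer (2*d-c+k+ of_int (i-jc)) (nat (L-(i-jc)))) *
     (pochhammer (a+b-2*d+2+ of_int (ja+jb)) (nat (L-(ja+jb))) * pochhammer (a+c-2*d+2+ of_int (ja+jc)) (nat (L-(ja+jc))) *
      pochhammer (b+c-2*d+2+ of_int (jb+jc)) (nat (L-(jb+jc)))) *
     (pochhammer (a-d+3/2+ of_int ja) (nat (L-ja)) * pochhammer (b-d+3/2+ of_int jb) (nat (L-jb)) *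
      pochhammer (c-d+3/2+ of_int jc) (nat (L-jc))) * neg1pow (of_int (ja+jb+jc))"

lemma GS:
  fixes x y :: complex
  assumes "y \<notin> \<int>\<^sub>\<le>\<^sub>0" "q0 \<le> m" "x = y + of_int (m - q0)"
  shows "Gamma x = pochhammer y (nat (m - q0)) * Gamma y"
proof -
  have "of_int (m - q0) = (of_nat (nat (m - q0)) :: complex)" using assms(2) by simp
  then have x: "x = y + of_nat (nat (m - q0))" using assms(3) by simp
  have "Gamma y \<noteq> 0" using assms(1) by (simp add: Gamma_eq_zero_iff)
  then show ?thesis unfolding x using pochhammer_Gamma[OF assms(1), of "nat (m - q0)"] by simp
qed

lemma RS:
  fixes x y :: complex
  assumes "m \<le> L" "y = x + of_int (L - m)"
  shows "rGamma x = pochhammer x (nat (L - m)) * rGamma y"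
proof -
  have "of_int (L - m) = (of_nat (nat (L - m)) :: complex)" using assms(1) by simp
  then have y: "y = x + of_nat (nat (L - m))" using assms(2) by simp
  show ?thesis unfolding y by (rule pochhammer_rGamma)
qed

lemma M_W:
  assumes np: "a+k+ of_int ox \<notin> \<int>\<^sub>\<le>\<^sub>0" "b+k+ of_int oy \<notin> \<int>\<^sub>\<le>\<^sub>0" "c+k+ of_int oz \<notin> \<int>\<^sub>\<le>\<^sub>0"
      "a+b+c-3*d+3/2+ of_int os \<notin> \<int>\<^sub>\<le>\<^sub>0"
    and o: "ox \<le> i+ja" "oy \<le> i+jb" "oz \<le> i+jc" "os \<le> ja+jb+jc"
    and l: "i-ja \<le> L" "i-jb \<le> L" "i-jc \<le> L" "ja+jb \<le> L" "ja+jc \<le> L" "jb+jc \<le> L"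
       "ja \<le> L" "jb \<le> L" "jc \<le> L"
  shows "M d (k + of_int i) (a + of_int ja) (b + of_int jb) (c + of_int jc)
       = W d k a b c i ja jb jc ox oy oz os L * Mb d k a b c ox oy oz os L"
proof -
  have g1: "Gamma (a + of_int ja + (k + of_int i)) = pochhammer (a+k+ of_int ox) (nat (i+ja-ox)) * Gamma (a+k+ of_int ox)"
    by (rule GS[OF np(1) o(1)]) (simp add: algebra_simps)
  have g2: "Gamma (b + of_int jb + (k + of_int i)) = pochhammer (b+k+ of_int oy) (nat (i+jb-oy)) * Gamma (b+k+ of_int oy)"
    by (rule GS[OF np(2) o(2)]) (simp add: algebra_simps)
  have g3: "Gamma (c + of_int jc + (k + of_int i)) = pochhammer (c+k+ of_int oz) (nat (i+jc-oz)) * Gamma (c+k+ of_int oz)"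
    by (rule GS[OF np(3) o(3)]) (simp add: algebra_simps)
  have g4: "Gamma (a + of_int ja + (b + of_int jb) + (c + of_int jc) - 3*d + 3/2)
      = pochhammer (a+b+c-3*d+3/2+ of_int os) (nat (ja+jb+jc-os)) * Gamma (a+b+c-3*d+3/2+ of_int os)"
    by (rule GS[OF np(4) o(4)]) (simp add: algebra_simps)
  have e1: "2*d - (a + of_int ja) + (k + of_int i) = 2*d-a+k+ of_int (i-ja)"
           "2*d - (b + of_int jb) + (k + of_int i) = 2*d-b+k+ of_int (i-jb)"
           "2*d - (c + of_int jc) + (k + of_int i) = 2*d-c+k+ of_int (i-jc)"
           "a + of_int ja + (b + of_int jb) - 2*d + 2 = a+b-2*d+2+ of_int (ja+jb)"
           "a + of_int ja + (c + of_int jc) - 2*d + 2 = a+c-2*d+2+ of_int (ja+jc)"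
           "b + of_int jb + (c + of_int jc) - 2*d + 2 = b+c-2*d+2+ of_int (jb+jc)"
           "a + of_int ja - d + 3/2 = a-d+3/2+ of_int ja"
           "b + of_int jb - d + 3/2 = b-d+3/2+ of_int jb"
           "c + of_int jc - d + 3/2 = c-d+3/2+ of_int jc"
           "a + of_int ja + (b + of_int jb) + (c + of_int jc) + d = of_int (ja+jb+jc) + (a+b+c+d)"
    by (simp_all add: algebra_simps)
  have r1: "rGamma (2*d-a+k+ of_int (i-ja)) = pochhammer (2*d-a+k+ of_int (i-ja)) (nat (L-(i-ja))) * rGamma (2*d-a+k+ of_int L)"
    by (rule RS[OF l(1)]) (simp add: algebra_simps)
  have r2: "rGamma (2*d-b+k+ of_int (i-jb)) = pochhammer (2*d-b+k+ of_int (i-jb)) (nat (L-(i-jb))) * rGamma (2*d-b+k+ of_int L)"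
    by (rule RS[OF l(2)]) (simp add: algebra_simps)
  have r3: "rGamma (2*d-c+k+ of_int (i-jc)) = pochhammer (2*d-c+k+ of_int (i-jc)) (nat (L-(i-jc))) * rGamma (2*d-c+k+ of_int L)"
    by (rule RS[OF l(3)]) (simp add: algebra_simps)
  have r4: "rGamma (a+b-2*d+2+ of_int (ja+jb)) = pochhammer (a+b-2*d+2+ of_int (ja+jb)) (nat (L-(ja+jb))) * rGamma (a+b-2*d+2+ of_int L)"
    by (rule RS[OF l(4)]) (simp add: algebra_simps)
  have r5: "rGamma (a+c-2*d+2+ of_int (ja+jc)) = pochhammer (a+c-2*d+2+ of_int (ja+jc)) (nat (L-(ja+jc))) * rGamma (a+c-2*d+2+ of_int L)"
    by (rule RS[OF l(5)]) (simp add: algebra_simps)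
  have r6: "rGamma (b+c-2*d+2+ of_int (jb+jc)) = pochhammer (b+c-2*d+2+ of_int (jb+jc)) (nat (L-(jb+jc))) * rGamma (b+c-2*d+2+ of_int L)"
    by (rule RS[OF l(6)]) (simp add: algebra_simps)
  have r7: "rGamma (a-d+3/2+ of_int ja) = pochhammer (a-d+3/2+ of_int ja) (nat (L-ja)) * rGamma (a-d+3/2+ of_int L)"
    by (rule RS[OF l(7)]) (simp add: algebra_simps)
  have r8: "rGamma (b-d+3/2+ of_int jb) = pochhammer (b-d+3/2+ of_int jb) (nat (L-jb)) * rGamma (b-d+3/2+ of_int L)"
    by (rule RS[OF l(8)]) (simp add: algebra_simps)
  have r9: "rGamma (c-d+3/2+ of_int jc) = pochhammer (c-d+3/2+ of_int jc) (nat (L-jc)) * rGamma (c-d+3/2+ of_int L)"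
    by (rule RS[OF l(9)]) (simp add: algebra_simps)
  have n1: "neg1pow (of_int (ja+jb+jc) + (a+b+c+d)) = neg1pow (of_int (ja+jb+jc)) * neg1pow (a+b+c+d)"
    by (rule neg1pow_add)
  show ?thesis
    unfolding M_def W_def Mb_def g1 g2 g3 g4 e1 r1 r2 r3 r4 r5 r6 r7 r8 r9 n1
    by (simp only: mult_ac)
qed



definition gbpoly :: "complex \<Rightarrow> complex \<Rightarrow> complex \<Rightarrow> complex \<Rightarrow> complex \<Rightarrow> complex" where
  "gbpoly d k a b c = gapoly d k b a c"
definition gcpoly :: "complex \<Rightarrow> complex \<Rightarrow> complex \<Rightarrow> complex \<Rightarrow> complex \<Rightarrow> complex" where
  "gcpoly d k a b c = gapoly d k c b a"

lemma Gb_M: "Gb d k a b c = gbpoly d k a b c * M d k a b c"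
  unfolding Gb_def Ga_def gbpoly_def M_sym_ab[of d k a b c] ..

lemma Gc_M: "Gc d k a b c = gcpoly d k a b c * M d k a b c"
  unfolding Gc_def Ga_def gcpoly_def M_sym_ac[of d k a b c] ..

definition HW :: "complex \<Rightarrow> nat \<Rightarrow> nat \<Rightarrow> nat \<Rightarrow> nat \<Rightarrow> int \<Rightarrow> int \<Rightarrow> int \<Rightarrow> int \<Rightarrow> int \<Rightarrow> int \<Rightarrow> int \<Rightarrow> int \<Rightarrow> int
     \<Rightarrow> complex \<Rightarrow> complex \<Rightarrow> complex \<Rightarrow> complex \<Rightarrow> complex" where
  "HW d \<kappa> \<alpha> \<beta> \<gamma> i0 ja0 jb0 jc0 ox oy oz os L k a b c =
     (\<Sum>j<\<kappa>. fpoly d (k + of_int (i0 + int j)) (a + of_int ja0) (b + of_int jb0) (c + of_int jc0)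
            * W d k a b c (i0 + int j) ja0 jb0 jc0 ox oy oz os L)
   + (\<Sum>j<\<alpha>. gapoly d (k + of_int (i0 + int \<kappa>)) (a + of_int (ja0 + int j)) (b + of_int jb0) (c + of_int jc0)
            * W d k a b c (i0 + int \<kappa>) (ja0 + int j) jb0 jc0 ox oy oz os L)
   + (\<Sum>j<\<beta>. gbpoly d (k + of_int (i0 + int \<kappa>)) (a + of_int (ja0 + int \<alpha>)) (b + of_int (jb0 + int j)) (c + of_int jc0)
            * W d k a b c (i0 + int \<kappa>) (ja0 + int \<alpha>) (jb0 + int j) jc0 ox oy oz os L)
   + (\<Sum>j<\<gamma>. gcpoly d (k + of_int (i0 + int \<kappa>)) (a + of_int (ja0 + int \<alpha>)) (b + of_int (jb0 + int \<beta>)) (c + of_int (jc0 + int j))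
            * W d k a b c (i0 + int \<kappa>) (ja0 + int \<alpha>) (jb0 + int \<beta>) (jc0 + int j) ox oy oz os L)"

lemma H_rep:
  assumes Mrep: "\<And>i ja jb jc. i0 \<le> i \<Longrightarrow> i \<le> i0 + int \<kappa> \<Longrightarrow> ja0 \<le> ja \<Longrightarrow> ja \<le> ja0 + int \<alpha> \<Longrightarrow>
      jb0 \<le> jb \<Longrightarrow> jb \<le> jb0 + int \<beta> \<Longrightarrow> jc0 \<le> jc \<Longrightarrow> jc \<le> jc0 + int \<gamma> \<Longrightarrow>
      M d (k + of_int i) (a + of_int ja) (b + of_int jb) (c + of_int jc)
        = W d k a b c i ja jb jc ox oy oz os L * Mb d k a b c ox oy oz os L"
  shows "H d \<kappa> \<alpha> \<beta> \<gamma> (k + of_int i0) (a + of_int ja0) (b + of_int jb0) (c + of_int jc0)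
       = HW d \<kappa> \<alpha> \<beta> \<gamma> i0 ja0 jb0 jc0 ox oy oz os L k a b c * Mb d k a b c ox oy oz os L"
proof -
  let ?Mb = "Mb d k a b c ox oy oz os L"
  have 1: "(\<Sum>j<\<kappa>. F0 (k + of_int i0 + of_nat j) (a + of_int ja0) (b + of_int jb0) (c + of_int jc0) d)
     = (\<Sum>j<\<kappa>. fpoly d (k + of_int (i0 + int j)) (a + of_int ja0) (b + of_int jb0) (c + of_int jc0)
            * W d k a b c (i0 + int j) ja0 jb0 jc0 ox oy oz os L) * ?Mb"
    unfolding sum_distrib_right
  proof (rule sum.cong[OF refl])
    fix j assume j: "j \<in> {..<\<kappa>}"
    have p: "k + of_int i0 + of_nat j = k + of_int (i0 + int j)" by simp
    have "M d (k + of_int (i0 + int j)) (a + of_int ja0) (b + of_int jb0) (c + of_int jc0)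
        = W d k a b c (i0 + int j) ja0 jb0 jc0 ox oy oz os L * ?Mb"
      by (rule Mrep) (use j in auto)
    then show "F0 (k + of_int i0 + of_nat j) (a + of_int ja0) (b + of_int jb0) (c + of_int jc0) d
        = fpoly d (k + of_int (i0 + int j)) (a + of_int ja0) (b + of_int jb0) (c + of_int jc0)
            * W d k a b c (i0 + int j) ja0 jb0 jc0 ox oy oz os L * ?Mb"
      unfolding p F0_M by (simp only: mult.assoc)
  qed
  have 2: "(\<Sum>j<\<alpha>. Ga d (k + of_int i0 + of_nat \<kappa>) (a + of_int ja0 + of_nat j) (b + of_int jb0) (c + of_int jc0))
     = (\<Sum>j<\<alpha>. gapoly d (k + of_int (i0 + int \<kappa>)) (a + of_int (ja0 + int j)) (b + of_int jb0) (c + of_int jc0)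
            * W d k a b c (i0 + int \<kappa>) (ja0 + int j) jb0 jc0 ox oy oz os L) * ?Mb"
    unfolding sum_distrib_right
  proof (rule sum.cong[OF refl])
    fix j assume j: "j \<in> {..<\<alpha>}"
    have p: "k + of_int i0 + of_nat \<kappa> = k + of_int (i0 + int \<kappa>)" "a + of_int ja0 + of_nat j = a + of_int (ja0 + int j)" by simp_all
    have "M d (k + of_int (i0 + int \<kappa>)) (a + of_int (ja0 + int j)) (b + of_int jb0) (c + of_int jc0)
        = W d k a b c (i0 + int \<kappa>) (ja0 + int j) jb0 jc0 ox oy oz os L * ?Mb"
      by (rule Mrep) (use j in auto)
    then show "Ga d (k + of_int i0 + of_nat \<kappa>) (a + of_int ja0 + of_nat j) (b + of_int jb0) (c + of_int jc0)
        = gapoly d (k + of_int (i0 + int \<kappa>)) (a + of_int (ja0 + int j)) (b + of_int jb0) (c + of_int jc0)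
            * W d k a b c (i0 + int \<kappa>) (ja0 + int j) jb0 jc0 ox oy oz os L * ?Mb"
      unfolding p Ga_def by (simp only: mult.assoc)
  qed
  have 3: "(\<Sum>j<\<beta>. Gb d (k + of_int i0 + of_nat \<kappa>) (a + of_int ja0 + of_nat \<alpha>) (b + of_int jb0 + of_nat j) (c + of_int jc0))
     = (\<Sum>j<\<beta>. gbpoly d (k + of_int (i0 + int \<kappa>)) (a + of_int (ja0 + int \<alpha>)) (b + of_int (jb0 + int j)) (c + of_int jc0)
            * W d k a b c (i0 + int \<kappa>) (ja0 + int \<alpha>) (jb0 + int j) jc0 ox oy oz os L) * ?Mb"
    unfolding sum_distrib_right
  proof (rule sum.cong[OF refl])
    fix j assume j: "j \<in> {..<\<beta>}"
    have p: "k + of_int i0 + of_nat \<kappa> = k + of_int (i0 + int \<kappa>)" "a + of_int ja0 + of_nat \<alpha> = a + of_int (ja0 + int \<alpha>)"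
      "b + of_int jb0 + of_nat j = b + of_int (jb0 + int j)" by simp_all
    have "M d (k + of_int (i0 + int \<kappa>)) (a + of_int (ja0 + int \<alpha>)) (b + of_int (jb0 + int j)) (c + of_int jc0)
        = W d k a b c (i0 + int \<kappa>) (ja0 + int \<alpha>) (jb0 + int j) jc0 ox oy oz os L * ?Mb"
      by (rule Mrep) (use j in auto)
    then show "Gb d (k + of_int i0 + of_nat \<kappa>) (a + of_int ja0 + of_nat \<alpha>) (b + of_int jb0 + of_nat j) (c + of_int jc0)
        = gbpoly d (k + of_int (i0 + int \<kappa>)) (a + of_int (ja0 + int \<alpha>)) (b + of_int (jb0 + int j)) (c + of_int jc0)
            * W d k a b c (i0 + int \<kappa>) (ja0 + int \<alpha>) (jb0 + int j) jc0 ox oy oz os L * ?Mb"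
      unfolding p Gb_M by (simp only: mult.assoc)
  qed
  have 4: "(\<Sum>j<\<gamma>. Gc d (k + of_int i0 + of_nat \<kappa>) (a + of_int ja0 + of_nat \<alpha>) (b + of_int jb0 + of_nat \<beta>) (c + of_int jc0 + of_nat j))
     = (\<Sum>j<\<gamma>. gcpoly d (k + of_int (i0 + int \<kappa>)) (a + of_int (ja0 + int \<alpha>)) (b + of_int (jb0 + int \<beta>)) (c + of_int (jc0 + int j))
            * W d k a b c (i0 + int \<kappa>) (ja0 + int \<alpha>) (jb0 + int \<beta>) (jc0 + int j) ox oy oz os L) * ?Mb"
    unfolding sum_distrib_right
  proof (rule sum.cong[OF refl])
    fix j assume j: "j \<in> {..<\<gamma>}"
    have p: "k + of_int i0 + of_nat \<kappa> = k + of_int (i0 + int \<kappa>)" "a + of_int ja0 + of_nat \<alpha> = a + of_int (ja0 + int \<alpha>)"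
      "b + of_int jb0 + of_nat \<beta> = b + of_int (jb0 + int \<beta>)" "c + of_int jc0 + of_nat j = c + of_int (jc0 + int j)" by simp_all
    have "M d (k + of_int (i0 + int \<kappa>)) (a + of_int (ja0 + int \<alpha>)) (b + of_int (jb0 + int \<beta>)) (c + of_int (jc0 + int j))
        = W d k a b c (i0 + int \<kappa>) (ja0 + int \<alpha>) (jb0 + int \<beta>) (jc0 + int j) ox oy oz os L * ?Mb"
      by (rule Mrep) (use j in auto)
    then show "Gc d (k + of_int i0 + of_nat \<kappa>) (a + of_int ja0 + of_nat \<alpha>) (b + of_int jb0 + of_nat \<beta>) (c + of_int jc0 + of_nat j)
        = gcpoly d (k + of_int (i0 + int \<kappa>)) (a + of_int (ja0 + int \<alpha>)) (b + of_int (jb0 + int \<beta>)) (c + of_int (jc0 + int j))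
            * W d k a b c (i0 + int \<kappa>) (ja0 + int \<alpha>) (jb0 + int \<beta>) (jc0 + int j) ox oy oz os L * ?Mb"
      unfolding p Gc_M by (simp only: mult.assoc)
  qed
  show ?thesis unfolding H_def HW_def 1 2 3 4 by (simp only: distrib_right)
qed



definition Sfun :: "complex \<Rightarrow> int \<Rightarrow> int \<Rightarrow> int \<Rightarrow> int \<Rightarrow> complex \<Rightarrow> complex \<Rightarrow> complex \<Rightarrow> complex \<Rightarrow> complex" where
  "Sfun d K A B C k a b c = H d (nat K) (nat A) (nat B) (nat C) k a b c
     - H d (nat (-K)) (nat (-A)) (nat (-B)) (nat (-C)) (k + of_int K) (a + of_int A) (b + of_int B) (c + of_int C)"

definition NN :: "complex \<Rightarrow> int \<Rightarrow> int \<Rightarrow> int \<Rightarrow> int \<Rightarrow> complex \<Rightarrow> complex \<Rightarrow> complex \<Rightarrow> complex \<Rightarrow> complex" where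
  "NN d K A B C k a b c =
     HW d (nat K) (nat A) (nat B) (nat C) 0 0 0 0 (min 0 (K+A)) (min 0 (K+B)) (min 0 (K+C)) (min 0 (A+B+C))
        (\<bar>K\<bar>+\<bar>A\<bar>+\<bar>B\<bar>+\<bar>C\<bar>) k a b c
   - HW d (nat (-K)) (nat (-A)) (nat (-B)) (nat (-C)) K A B C (min 0 (K+A)) (min 0 (K+B)) (min 0 (K+C)) (min 0 (A+B+C))
        (\<bar>K\<bar>+\<bar>A\<bar>+\<bar>B\<bar>+\<bar>C\<bar>) k a b c"

definition MbV :: "complex \<Rightarrow> int \<Rightarrow> int \<Rightarrow> int \<Rightarrow> int \<Rightarrow> complex \<Rightarrow> complex \<Rightarrow> complex \<Rightarrow> complex \<Rightarrow> complex" where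
  "MbV d K A B C k a b c = Mb d k a b c (min 0 (K+A)) (min 0 (K+B)) (min 0 (K+C)) (min 0 (A+B+C))
        (\<bar>K\<bar>+\<bar>A\<bar>+\<bar>B\<bar>+\<bar>C\<bar>)"

lemma S_rep:
  assumes np: "a+k+ of_int (min 0 (K+A)) \<notin> \<int>\<^sub>\<le>\<^sub>0" "b+k+ of_int (min 0 (K+B)) \<notin> \<int>\<^sub>\<le>\<^sub>0"
      "c+k+ of_int (min 0 (K+C)) \<notin> \<int>\<^sub>\<le>\<^sub>0" "a+b+c-3*d+3/2+ of_int (min 0 (A+B+C)) \<notin> \<int>\<^sub>\<le>\<^sub>0"
  shows "Sfun d K A B C k a b c = NN d K A B C k a b c * MbV d K A B C k a b c"
proof -
  let ?ox = "min 0 (K+A)" and ?oy = "min 0 (K+B)" and ?oz = "min 0 (K+C)" and ?os = "min 0 (A+B+C)"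
    and ?L = "\<bar>K\<bar>+\<bar>A\<bar>+\<bar>B\<bar>+\<bar>C\<bar>"
  have h1: "H d (nat K) (nat A) (nat B) (nat C) (k + of_int 0) (a + of_int 0) (b + of_int 0) (c + of_int 0)
     = HW d (nat K) (nat A) (nat B) (nat C) 0 0 0 0 ?ox ?oy ?oz ?os ?L k a b c * Mb d k a b c ?ox ?oy ?oz ?os ?L"
  proof (rule H_rep)
    fix i ja jb jc :: int
    assume b: "0 \<le> i" "i \<le> 0 + int (nat K)" "0 \<le> ja" "ja \<le> 0 + int (nat A)"
      "0 \<le> jb" "jb \<le> 0 + int (nat B)" "0 \<le> jc" "jc \<le> 0 + int (nat C)"
    show "M d (k + of_int i) (a + of_int ja) (b + of_int jb) (c + of_int jc)
        = W d k a b c i ja jb jc ?ox ?oy ?oz ?os ?L * Mb d k a b c ?ox ?oy ?oz ?os ?L"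
      by (rule M_W[OF np]) (use b in arith)+
  qed
  have h2: "H d (nat (-K)) (nat (-A)) (nat (-B)) (nat (-C)) (k + of_int K) (a + of_int A) (b + of_int B) (c + of_int C)
     = HW d (nat (-K)) (nat (-A)) (nat (-B)) (nat (-C)) K A B C ?ox ?oy ?oz ?os ?L k a b c * Mb d k a b c ?ox ?oy ?oz ?os ?L"
  proof (rule H_rep)
    fix i ja jb jc :: int
    assume b: "K \<le> i" "i \<le> K + int (nat (-K))" "A \<le> ja" "ja \<le> A + int (nat (-A))"
      "B \<le> jb" "jb \<le> B + int (nat (-B))" "C \<le> jc" "jc \<le> C + int (nat (-C))"
    show "M d (k + of_int i) (a + of_int ja) (b + of_int jb) (c + of_int jc)
        = W d k a b c i ja jb jc ?ox ?oy ?oz ?os ?L * Mb d k a b c ?ox ?oy ?oz ?os ?L"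
      by (rule M_W[OF np]) (use b in arith)+
  qed
  show ?thesis using h1 h2 unfolding Sfun_def NN_def MbV_def by (simp add: algebra_simps)
qed

lemma ofint_nat_neg: "of_int K + of_nat (nat (-K)) = (of_nat (nat K) :: complex)"
  by (cases "K \<ge> 0") simp_all

lemma MAIN_id:
  assumes np1: "F0_defined k a b c d"
    and np2: "F0_defined (k + of_int K) (a + of_int A) (b + of_int B) (c + of_int C) d"
  shows "F0 (k + of_int K) (a + of_int A) (b + of_int B) (c + of_int C) d - F0 k a b c d
       = Sfun d K A B C (k+1) a b c - Sfun d K A B C k a b c"
proof -
  note u1 = UP[OF np1, of "nat K" "nat A" "nat B" "nat C"]
  note u2 = UP[OF np2, of "nat (-K)" "nat (-A)" "nat (-B)" "nat (-C)"]
  have p: "k + of_int K + of_nat (nat (-K)) = k + of_nat (nat K)"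
          "a + of_int A + of_nat (nat (-A)) = a + of_nat (nat A)"
          "b + of_int B + of_nat (nat (-B)) = b + of_nat (nat B)"
          "c + of_int C + of_nat (nat (-C)) = c + of_nat (nat C)"
    by (simp_all only: add.assoc ofint_nat_neg)
  have q: "k + 1 + of_int K = k + of_int K + 1" by simp
  let ?X = "F0 (k + of_nat (nat K)) (a + of_nat (nat A)) (b + of_nat (nat B)) (c + of_nat (nat C)) d"
  let ?E = "F0 (k + of_int K) (a + of_int A) (b + of_int B) (c + of_int C) d"
  have u2': "?X - ?E = H d (nat (-K)) (nat (-A)) (nat (-B)) (nat (-C)) (k + of_int K + 1) (a + of_int A) (b + of_int B) (c + of_int C)
     - H d (nat (-K)) (nat (-A)) (nat (-B)) (nat (-C)) (k + of_int K) (a + of_int A) (b + of_int B) (c + of_int C)"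
    using u2 unfolding p .
  have r: "\<And>x1 y1 x2 y2 :: complex. (x1 - y1) - (x2 - y2) = (x1 - x2) - (y1 - y2)" by simp
  have "?E - F0 k a b c d = (?X - F0 k a b c d) - (?X - ?E)" by simp
  also have "\<dots> = Sfun d K A B C (k+1) a b c - Sfun d K A B C k a b c"
    unfolding u1 u2' Sfun_def q by (rule r)
  finally show ?thesis .
qed



lemma neg1pow_4m: "neg1pow (of_int (4*m)) = 1"
proof -
  have h: "exp (4 * of_int m * complex_of_real pi * \<i>) = 1"
    using exp_integer_2pi[of "of_int (2*m)"] by simp
  have e: "\<i> * complex_of_real pi * of_int (4*m) = 4 * of_int m * complex_of_real pi * \<i>" by simp
  show ?thesis unfolding neg1pow_def e by (rule h)
qed

lemma F0_dshift: "F0 x (y1 + of_int m) (y2 + of_int m) (y3 + of_int m) (e + of_int m) = F0 (x + of_int m) y1 y2 y3 e"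
proof -
  have q: "y1 + of_int m + x = y1 + (x + of_int m)" "y2 + of_int m + x = y2 + (x + of_int m)"
    "y3 + of_int m + x = y3 + (x + of_int m)"
    "2 * (e + of_int m) - (y1 + of_int m) + x = 2 * e - y1 + (x + of_int m)"
    "2 * (e + of_int m) - (y2 + of_int m) + x = 2 * e - y2 + (x + of_int m)"
    "2 * (e + of_int m) - (y3 + of_int m) + x = 2 * e - y3 + (x + of_int m)"
    "y1 + of_int m + (y2 + of_int m) + (y3 + of_int m) - 3 * (e + of_int m) + 3/2 = y1 + y2 + y3 - 3 * e + 3/2"
    "y1 + of_int m + (y2 + of_int m) - 2 * (e + of_int m) + 1 = y1 + y2 - 2 * e + 1"
    "y1 + of_int m + (y3 + of_int m) - 2 * (e + of_int m) + 1 = y1 + y3 - 2 * e + 1"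
    "y2 + of_int m + (y3 + of_int m) - 2 * (e + of_int m) + 1 = y2 + y3 - 2 * e + 1"
    "y1 + of_int m - (e + of_int m) + 1/2 = y1 - e + 1/2"
    "y2 + of_int m - (e + of_int m) + 1/2 = y2 - e + 1/2"
    "y3 + of_int m - (e + of_int m) + 1/2 = y3 - e + 1/2"
    "y1 + of_int m + (y2 + of_int m) + (y3 + of_int m) + (e + of_int m) = (y1 + y2 + y3 + e) + of_int (4*m)"
    by (simp_all add: algebra_simps)
  show ?thesis unfolding F0_def q neg1pow_add neg1pow_4m by simp
qed

lemma F0_defined_dshift:
  "F0_defined x (y1 + of_int m) (y2 + of_int m) (y3 + of_int m) (e + of_int m) = F0_defined (x + of_int m) y1 y2 y3 e"
proof -
  have q: "y1 + of_int m + x = y1 + (x + of_int m)" "y2 + of_int m + x = y2 + (x + of_int m)"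
    "y3 + of_int m + x = y3 + (x + of_int m)"
    "y1 + of_int m + (y2 + of_int m) + (y3 + of_int m) - 3 * (e + of_int m) + 3/2 = y1 + y2 + y3 - 3 * e + 3/2"
    by (simp_all add: algebra_simps)
  show ?thesis unfolding F0_defined_def q ..
qed

definition aff :: "(int \<Rightarrow> int \<Rightarrow> complex) \<Rightarrow> bool" where
  "aff g \<longleftrightarrow> (\<exists>\<alpha> \<beta> \<gamma>. \<forall>n k. g n k = of_int \<alpha> * of_int n + of_int \<beta> * of_int k + \<gamma>)"

lemma aff_const [intro]: "aff (\<lambda>n k. c)"
  unfolding aff_def by (rule exI[of _ 0], rule exI[of _ 0], rule exI[of _ c]) simp

lemma aff_add [intro]: "aff f \<Longrightarrow> aff g \<Longrightarrow> aff (\<lambda>n k. f n k + g n k)"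
  unfolding aff_def
proof (elim exE)
  fix a1 b1 c1 a2 b2 c2
  assume 1: "\<forall>n k. f n k = of_int a1 * of_int n + of_int b1 * of_int k + c1"
    and 2: "\<forall>n k. g n k = of_int a2 * of_int n + of_int b2 * of_int k + c2"
  show "\<exists>\<alpha> \<beta> \<gamma>. \<forall>n k. f n k + g n k = of_int \<alpha> * of_int n + of_int \<beta> * of_int k + \<gamma>"
    by (rule exI[of _ "a1+a2"], rule exI[of _ "b1+b2"], rule exI[of _ "c1+c2"]) (simp add: 1 2 algebra_simps)
qed

lemma aff_diff [intro]: "aff f \<Longrightarrow> aff g \<Longrightarrow> aff (\<lambda>n k. f n k - g n k)"
  unfolding aff_def
proof (elim exE)
  fix a1 b1 c1 a2 b2 c2
  assume 1: "\<forall>n k. f n k = of_int a1 * of_int n + of_int b1 * of_int k + c1"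
    and 2: "\<forall>n k. g n k = of_int a2 * of_int n + of_int b2 * of_int k + c2"
  show "\<exists>\<alpha> \<beta> \<gamma>. \<forall>n k. f n k - g n k = of_int \<alpha> * of_int n + of_int \<beta> * of_int k + \<gamma>"
    by (rule exI[of _ "a1-a2"], rule exI[of _ "b1-b2"], rule exI[of _ "c1-c2"]) (simp add: 1 2 algebra_simps)
qed

lemma aff_lin [intro]: "aff (\<lambda>n k. of_int \<alpha> * of_int n + of_int \<beta> * of_int k + \<gamma>)"
  unfolding aff_def by blast

lemma aff_shift: "aff g \<Longrightarrow> aff (\<lambda>n k. g (n + dn) (k + dk))"
  unfolding aff_def
proof (elim exE)
  fix a1 b1 c1
  assume 1: "\<forall>n k. g n k = of_int a1 * of_int n + of_int b1 * of_int k + c1"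
  show "\<exists>\<alpha> \<beta> \<gamma>. \<forall>n k. g (n + dn) (k + dk) = of_int \<alpha> * of_int n + of_int \<beta> * of_int k + \<gamma>"
    by (rule exI[of _ a1], rule exI[of _ b1], rule exI[of _ "c1 + of_int a1 * of_int dn + of_int b1 * of_int dk"])
       (simp add: 1 algebra_simps)
qed

lemma aff_ispoly: "aff g \<Longrightarrow> ispoly g"
proof -
  assume "aff g"
  then obtain \<alpha> \<beta> \<gamma> where e: "\<And>n k. g n k = of_int \<alpha> * of_int n + of_int \<beta> * of_int k + \<gamma>"
    unfolding aff_def by blast
  have "g = (\<lambda>n k. of_int \<alpha> * of_int n + of_int \<beta> * of_int k + \<gamma>)" by (simp add: fun_eq_iff e)
  then show ?thesis using ispoly_aff by simp
qed

lemma hyp2_Gamma': "aff g \<Longrightarrow> hypergeometric2 (\<lambda>n k. Gamma (g n k))"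
proof -
  assume "aff g"
  then obtain \<alpha> \<beta> \<gamma> where e: "\<And>n k. g n k = of_int \<alpha> * of_int n + of_int \<beta> * of_int k + \<gamma>"
    unfolding aff_def by blast
  show ?thesis unfolding e by (rule hyp2_Gamma_aff)
qed

lemma hyp2_rGamma': "aff g \<Longrightarrow> hypergeometric2 (\<lambda>n k. rGamma (g n k))"
proof -
  assume "aff g"
  then obtain \<alpha> \<beta> \<gamma> where e: "\<And>n k. g n k = of_int \<alpha> * of_int n + of_int \<beta> * of_int k + \<gamma>"
    unfolding aff_def by blast
  show ?thesis unfolding e by (rule hyp2_rGamma_aff)
qed

lemma hyp2_neg1pow': "aff g \<Longrightarrow> hypergeometric2 (\<lambda>n k. neg1pow (g n k))"
proof -
  assume "aff g"
  then obtain \<alpha> \<beta> \<gamma> where e: "\<And>n k. g n k = of_int \<alpha> * of_int n + of_int \<beta> * of_int k + \<gamma>"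
    unfolding aff_def by blast
  show ?thesis unfolding e by (rule hyp2_neg1pow_aff)
qed

lemma hyp2_MbV:
  assumes "aff kk" "aff aa" "aff bb" "aff cc"
  shows "hypergeometric2 (\<lambda>n k. MbV d K A B C (kk n k) (aa n k) (bb n k) (cc n k))"
  unfolding MbV_def Mb_def
  by (intro hyp2_mult hyp2_Gamma' hyp2_rGamma' hyp2_neg1pow' aff_add aff_diff aff_const assms)

lemma ispoly_HW:
  assumes "ispoly kk" "ispoly aa" "ispoly bb" "ispoly cc"
  shows "ispoly (\<lambda>n k. HW d \<kappa> \<alpha> \<beta> \<gamma> i0 ja0 jb0 jc0 ox oy oz os L (kk n k) (aa n k) (bb n k) (cc n k))"
  unfolding HW_def W_def fpoly_def gapoly_def gbpoly_def gcpoly_def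
  by (intro ispoly_sum ispoly_add ispoly_diff ispoly_mult ispoly_pochhammer ispoly_uminus ispoly_const assms)

lemma ispoly_NN:
  assumes "aff kk" "aff aa" "aff bb" "aff cc"
  shows "ispoly (\<lambda>n k. NN d K A B C (kk n k) (aa n k) (bb n k) (cc n k))"
  unfolding NN_def using assms by (intro ispoly_diff ispoly_HW aff_ispoly)

lemma hyp2_G:
  assumes "aff kk" "aff aa" "aff bb" "aff cc"
  shows "hypergeometric2 (\<lambda>n k. NN d K A B C (kk n k) (aa n k) (bb n k) (cc n k)
                              * MbV d K A B C (kk n k) (aa n k) (bb n k) (cc n k))"
proof (rule hyp2_mult)
  show "hypergeometric2 (\<lambda>n k. MbV d K A B C (kk n k) (aa n k) (bb n k) (cc n k))"
    using assms by (rule hyp2_MbV)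
  show "hypergeometric2 (\<lambda>n k. NN d K A B C (kk n k) (aa n k) (bb n k) (cc n k))"
  proof (rule hyp2_ispoly)
    show "ispoly (\<lambda>n k. NN d K A B C (kk n k) (aa n k) (bb n k) (cc n k))" using assms by (rule ispoly_NN)
    fix dn dk
    show "ispoly (\<lambda>n k. NN d K A B C (kk (n + dn) (k + dk)) (aa (n + dn) (k + dk)) (bb (n + dn) (k + dk)) (cc (n + dn) (k + dk)))"
      using ispoly_NN[OF aff_shift[OF assms(1)] aff_shift[OF assms(2)] aff_shift[OF assms(3)] aff_shift[OF assms(4)]] .
  qed
qed

lemma base_np:
  assumes np1: "F0_defined k a b c d"
    and np2: "F0_defined (k + of_int K) (a + of_int A) (b + of_int B) (c + of_int C) d"
  shows "a+k+ of_int (min 0 (K+A)) \<notin> \<int>\<^sub>\<le>\<^sub>0 \<and> b+k+ of_int (min 0 (K+B)) \<notin> \<int>\<^sub>\<le>\<^sub>0 \<and>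
      c+k+ of_int (min 0 (K+C)) \<notin> \<int>\<^sub>\<le>\<^sub>0 \<and> a+b+c-3*d+3/2+ of_int (min 0 (A+B+C)) \<notin> \<int>\<^sub>\<le>\<^sub>0"
proof -
  have x: "a + k \<notin> \<int>\<^sub>\<le>\<^sub>0" "b + k \<notin> \<int>\<^sub>\<le>\<^sub>0" "c + k \<notin> \<int>\<^sub>\<le>\<^sub>0" "a+b+c-3*d+3/2 \<notin> \<int>\<^sub>\<le>\<^sub>0"
    using np1 unfolding F0_defined_def by auto
  have y: "a + of_int A + (k + of_int K) \<notin> \<int>\<^sub>\<le>\<^sub>0" "b + of_int B + (k + of_int K) \<notin> \<int>\<^sub>\<le>\<^sub>0"
    "c + of_int C + (k + of_int K) \<notin> \<int>\<^sub>\<le>\<^sub>0"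
    "a + of_int A + (b + of_int B) + (c + of_int C) - 3*d+3/2 \<notin> \<int>\<^sub>\<le>\<^sub>0"
    using np2 unfolding F0_defined_def by auto
  have "a+k+ of_int (min 0 (K+A)) \<notin> \<int>\<^sub>\<le>\<^sub>0"
  proof (cases "K + A \<ge> 0")
    case True then show ?thesis using x by simp
  next
    case False
    have e: "a+k+ of_int (min 0 (K+A)) = a + of_int A + (k + of_int K)" using False by (simp add: algebra_simps)
    show ?thesis unfolding e by (rule y(1))
  qed
  moreover have "b+k+ of_int (min 0 (K+B)) \<notin> \<int>\<^sub>\<le>\<^sub>0"
  proof (cases "K + B \<ge> 0")
    case True then show ?thesis using x by simp
  next
    case False
    have e: "b+k+ of_int (min 0 (K+B)) = b + of_int B + (k + of_int K)" using False by (simp add: algebra_simps)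
    show ?thesis unfolding e by (rule y(2))
  qed
  moreover have "c+k+ of_int (min 0 (K+C)) \<notin> \<int>\<^sub>\<le>\<^sub>0"
  proof (cases "K + C \<ge> 0")
    case True then show ?thesis using x by simp
  next
    case False
    have e: "c+k+ of_int (min 0 (K+C)) = c + of_int C + (k + of_int K)" using False by (simp add: algebra_simps)
    show ?thesis unfolding e by (rule y(3))
  qed
  moreover have "a+b+c-3*d+3/2+ of_int (min 0 (A+B+C)) \<notin> \<int>\<^sub>\<le>\<^sub>0"
  proof (cases "A+B+C \<ge> 0")
    case True then show ?thesis using x by simp
  next
    case False
    have e: "a+b+c-3*d+3/2+ of_int (min 0 (A+B+C)) = a + of_int A + (b + of_int B) + (c + of_int C) - 3*d+3/2"
      using False by (simp add: algebra_simps)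
    show ?thesis unfolding e by (rule y(4))
  qed
  ultimately show ?thesis by blast
qed

lemma base_np_succ:
  fixes a k :: complex
  assumes "a+k+ of_int ox \<notin> \<int>\<^sub>\<le>\<^sub>0"
  shows "a+(k+1)+ of_int ox \<notin> \<int>\<^sub>\<le>\<^sub>0"
proof -
  have e: "a+(k+1)+ of_int ox = (a+k+ of_int ox) + of_nat 1" by simp
  show ?thesis unfolding e by (rule nonpos_shift[OF assms])
qed

lemma WZ_core:
  assumes np1: "F0_defined k a b c d"
    and np2: "F0_defined (k + of_int K) (a + of_int A) (b + of_int B) (c + of_int C) d"
  shows "F0 (k + of_int K) (a + of_int A) (b + of_int B) (c + of_int C) d - F0 k a b c d
       = NN d K A B C (k+1) a b c * MbV d K A B C (k+1) a b c - NN d K A B C k a b c * MbV d K A B C k a b c"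
proof -
  note bn = base_np[OF np1 np2]
  have s0: "Sfun d K A B C k a b c = NN d K A B C k a b c * MbV d K A B C k a b c"
    by (rule S_rep) (use bn in blast)+
  have s1: "Sfun d K A B C (k+1) a b c = NN d K A B C (k+1) a b c * MbV d K A B C (k+1) a b c"
    by (rule S_rep) (use bn base_np_succ in blast)+
  show ?thesis unfolding MAIN_id[OF np1 np2] s0 s1 ..
qed



lemma aff_n [intro]: "aff (\<lambda>n k. of_int \<alpha> * of_int n)"
  unfolding aff_def by (rule exI[of _ \<alpha>], rule exI[of _ 0], rule exI[of _ 0]) simp

lemma aff_k [intro]: "aff (\<lambda>n k. of_int k)"
  unfolding aff_def by (rule exI[of _ 0], rule exI[of _ 1], rule exI[of _ 0]) simp

theorem theorem1:
  fixes K A B C D :: int and k0 a b c d :: complex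
  defines "F \<equiv> (\<lambda>n k :: int. F0 (of_int K * of_int n + k0 + of_int k)
                 (of_int A * of_int n + a) (of_int B * of_int n + b)
                 (of_int C * of_int n + c) (of_int D * of_int n + d))"
  defines "Fdef \<equiv> (\<lambda>n k :: int. F0_defined (of_int K * of_int n + k0 + of_int k)
                 (of_int A * of_int n + a) (of_int B * of_int n + b)
                 (of_int C * of_int n + c) (of_int D * of_int n + d))"
  shows "\<exists>G. hypergeometric2 G \<and>
           (\<forall>n k. Fdef n k \<and> Fdef (n + 1) k \<and> Fdef n (k + 1) \<longrightarrow>
                  F (n + 1) k - F n k = G n (k + 1) - G n k)"
proof -
  define K' where "K' = K + D"
  define A' where "A' = A - D"
  define B' where "B' = B - D"
  define C' where "C' = C - D"
  define kk where "kk = (\<lambda>n k::int. of_int K' * of_int n + of_int k + k0 :: complex)"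
  define aa where "aa = (\<lambda>n k::int. of_int A' * of_int n + a :: complex)"
  define bb where "bb = (\<lambda>n k::int. of_int B' * of_int n + b :: complex)"
  define cc where "cc = (\<lambda>n k::int. of_int C' * of_int n + c :: complex)"
  have e: "\<And>n k. of_int A * of_int n + a = aa n k + of_int (D*n)"
          "\<And>n k. of_int B * of_int n + b = bb n k + of_int (D*n)"
          "\<And>n k. of_int C * of_int n + c = cc n k + of_int (D*n)"
          "\<And>n. of_int D * of_int n + d = d + of_int (D*n)"
    unfolding aa_def bb_def cc_def A'_def B'_def C'_def by (simp_all add: algebra_simps)
  have e2: "\<And>n k. of_int K * of_int n + k0 + of_int k + of_int (D*n) = kk n k"
    unfolding kk_def K'_def by (simp add: algebra_simps)
  have Fe: "F n k = F0 (kk n k) (aa n k) (bb n k) (cc n k) d" for n k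
    unfolding F_def e(1-3)[of n k] e(4)[of n] F0_dshift e2[of n k] ..
  have Fde: "Fdef n k = F0_defined (kk n k) (aa n k) (bb n k) (cc n k) d" for n k
    unfolding Fdef_def e(1-3)[of n k] e(4)[of n] F0_defined_dshift e2[of n k] ..
  have sn: "\<And>n k. kk (n+1) k = kk n k + of_int K'" "\<And>n k. aa (n+1) k = aa n k + of_int A'"
      "\<And>n k. bb (n+1) k = bb n k + of_int B'" "\<And>n k. cc (n+1) k = cc n k + of_int C'"
    unfolding kk_def aa_def bb_def cc_def by (simp_all add: algebra_simps)
  have sk: "\<And>n k. kk n (k+1) = kk n k + 1" "\<And>n k. aa n (k+1) = aa n k"
      "\<And>n k. bb n (k+1) = bb n k" "\<And>n k. cc n (k+1) = cc n k"
    unfolding kk_def aa_def bb_def cc_def by (simp_all add: algebra_simps)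
  have affs: "aff kk" "aff aa" "aff bb" "aff cc"
    unfolding kk_def aa_def bb_def cc_def by (intro aff_add aff_n aff_k aff_const)+
  define G where "G = (\<lambda>n k. NN d K' A' B' C' (kk n k) (aa n k) (bb n k) (cc n k)
                              * MbV d K' A' B' C' (kk n k) (aa n k) (bb n k) (cc n k))"
  show ?thesis
  proof (rule exI[of _ G], intro conjI allI impI)
    show "hypergeometric2 G" unfolding G_def using affs by (rule hyp2_G)
    fix n k
    assume asm: "Fdef n k \<and> Fdef (n + 1) k \<and> Fdef n (k + 1)"
    have np1: "F0_defined (kk n k) (aa n k) (bb n k) (cc n k) d" using asm Fde by simp
    have np2: "F0_defined (kk n k + of_int K') (aa n k + of_int A') (bb n k + of_int B') (cc n k + of_int C') d"
      using asm Fde[of "n+1" k] unfolding sn by simp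
    have "F (n + 1) k - F n k = F0 (kk n k + of_int K') (aa n k + of_int A') (bb n k + of_int B') (cc n k + of_int C') d
        - F0 (kk n k) (aa n k) (bb n k) (cc n k) d"
      unfolding Fe sn ..
    also have "\<dots> = G n (k + 1) - G n k"
      unfolding WZ_core[OF np1 np2] G_def sk ..
    finally show "F (n + 1) k - F n k = G n (k + 1) - G n k" .
  qed
qed


end
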